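(* Assume the setting of the context and suppose Assumption (A5) holds. Then for any compact interval $I\subset(0,\infty)$, \[\limsup_{n\rightarrow \infty}\sup_{t\in I}\alpha(n)^{-\kappa}h_{G^n}^{-1}(\gamma(n)t)<\infty.\]
   Context: Let $(E,d_E)$ be a metric space and $F\subseteq E$ such that $F\cap\overline{B}_E(x,r)$ is compact for all $x\in E$, $r>0$ ($\overline{B}_E$, $B_E$ closed and open balls in $E$). Let $d_F:=d_E|_{F\times F}$, $\rho\in F$, and $\nu$ a Radon measure of full support on $(F,d_F)$ (extended to $E$ by $\nu(A):=\nu(A\cap F)$). For a locally finite connected graph $G$ with at least two vertices and distinguished vertex $\rho(G)$: $d_G$ is the shortest-path metric, $B_G(x,r)$ the open $d_G$-ball; $\mu^G$ a symmetric weight with $\mu^G_{xy}>0$ iff $\{x,y\}$ is an edge; $\mu^G_x:=\sum_y\mu^G_{xy}$; $\nu^G(A):=\sum_{x\in A}\mu^G_x$; $P_G(x,y)=\mu^G_{xy}/\mu^G_x$; generator $\mathcal{L}_Gf(x)=\sum_yP_G(x,y)(f(y)-f(x))$; $(f,g)_G:=\sum_xf(x)g(x)\nu^G(\{x\})$; $\mathcal{E}_G(f,g):=-(\mathcal{L}_Gf,g)_G$ on $\mathcal{F}_G:=\{f:\mathcal{E}_G(f,f)<\infty\}$; resistance metric $R_G(x,y):=\sup\{|f(x)-f(y)|^2/\mathcal{E}_G(f,f):f\in\mathcal{F}_G,\mathcal{E}_G(f,f)>0\}$; $V_G(r):=\nu^G(\{x:R_G(\rho(G),x)\le r\})$, $h_G(r):=rV_G(r)$,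 $h_G^{-1}(m):=\sup\{r:h_G(r)\le m\}$. $(G^n)_{n\ge1}$ are such graphs with $V(G^n)\subseteq E$, $\rho(G^n)=\rho$; $\nu^n:=\nu^{G^n}$. $(\alpha(n)),(\beta(n)),(\gamma(n))$ are non-negative sequences diverging to $\infty$. Assumption (A5): (i) there is $c>0$ with $d_{G^n}(x,y)\ge c\alpha(n)d_E(x,y)$ for all $x,y\in V(G^n)$, $n\ge1$, and a non-negative $\tilde\alpha(n)=o(\alpha(n))$ such that for each $r>0$ there are $c'<\infty$, $n_0$ with $d_{G^n}(x,y)\le c'\alpha(n)d_E(x,y)+\tilde\alpha(n)$ for all $x,y\in V(G^n)\cap B_E(\rho,r)$, $n\ge n_0$; (ii) for every $x\in F$, $r>0$, $\lim_n\beta(n)^{-1}\nu^n(B_E(x,r))=\nu(B_E(x,r))$; (iii) for some $\kappa\in(0,\infty)$ there exist constants $c_1,c_2,c_3\in(0,\infty)$ and an integer $n_0$ such that $R_{G^n}(x,y)\le c_1d_{G^n}(x,y)^\kappa$ for all $x,y\in V(G^n)$, and $c_2\gamma(n)\le\alpha(n)^\kappa\beta(n)\le c_3\gamma(n)$, for all $n\ge n_0$. *)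

theory Defs
  imports "HOL-Analysis.Analysis" "HOL-Library.Landau_Symbols"
begin

definition adj :: "('e \<Rightarrow> 'e \<Rightarrow> real) \<Rightarrow> 'e \<Rightarrow> 'e \<Rightarrow> bool" where
  "adj mu x y \<longleftrightarrow> 0 < mu x y"

definition weighted_graph :: "'e set \<Rightarrow> ('e \<Rightarrow> 'e \<Rightarrow> real) \<Rightarrow> bool" where
  "weighted_graph V mu \<longleftrightarrow>
     (\<forall>x y. mu x y = mu y x) \<and>
     (\<forall>x y. 0 \<le> mu x y) \<and>
     (\<forall>x y. 0 < mu x y \<longrightarrow> x \<in> V \<and> y \<in> V \<and> x \<noteq> y) \<and>
     (\<forall>x\<in>V. finite {y. 0 < mu x y}) \<and>
     (\<forall>x\<in>V. \<forall>y\<in>V. \<exists>k. (adj mu ^^ k) x y) \<and>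
     (\<exists>x\<in>V. \<exists>y\<in>V. x \<noteq> y)"

definition gdist :: "('e \<Rightarrow> 'e \<Rightarrow> real) \<Rightarrow> 'e \<Rightarrow> 'e \<Rightarrow> real" where
  "gdist mu x y = real (LEAST k. (adj mu ^^ k) x y)"

definition vweight :: "('e \<Rightarrow> 'e \<Rightarrow> real) \<Rightarrow> 'e \<Rightarrow> real" where
  "vweight mu x = (\<Sum>y\<in>{y. 0 < mu x y}. mu x y)"

definition gmeasure :: "'e set \<Rightarrow> ('e \<Rightarrow> 'e \<Rightarrow> real) \<Rightarrow> 'e set \<Rightarrow> ennreal" where
  "gmeasure V mu A = (\<integral>\<^sup>+ x. ennreal (vweight mu x) \<partial>count_space (A \<inter> V))"

definition energy :: "'e set \<Rightarrow> ('e \<Rightarrow> 'e \<Rightarrow> real) \<Rightarrow> ('e \<Rightarrow> real) \<Rightarrow> ennreal" where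
  "energy V mu f =
     (\<integral>\<^sup>+ x. (\<integral>\<^sup>+ y. ennreal (mu x y * (f x - f y)\<^sup>2) \<partial>count_space V) \<partial>count_space V) / 2"

definition resist :: "'e set \<Rightarrow> ('e \<Rightarrow> 'e \<Rightarrow> real) \<Rightarrow> 'e \<Rightarrow> 'e \<Rightarrow> real" where
  "resist V mu x y =
     Sup {\<bar>f x - f y\<bar>\<^sup>2 / enn2real (energy V mu f) | f. energy V mu f < top \<and> 0 < energy V mu f}"

definition rvol :: "'e set \<Rightarrow> ('e \<Rightarrow> 'e \<Rightarrow> real) \<Rightarrow> 'e \<Rightarrow> real \<Rightarrow> ennreal" where
  "rvol V mu \<rho> r = gmeasure V mu {x \<in> V. resist V mu \<rho> x \<le> r}"

definition hfun :: "'e set \<Rightarrow> ('e \<Rightarrow> 'e \<Rightarrow> real) \<Rightarrow> 'e \<Rightarrow> real \<Rightarrow> ennreal" where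
  "hfun V mu \<rho> r = ennreal r * rvol V mu \<rho> r"

definition hinv :: "'e set \<Rightarrow> ('e \<Rightarrow> 'e \<Rightarrow> real) \<Rightarrow> 'e \<Rightarrow> real \<Rightarrow> real" where
  "hinv V mu \<rho> m = Sup {r. 0 \<le> r \<and> hfun V mu \<rho> r \<le> ennreal m}"

end

theory Submission
  imports Defs
begin

lemma gmeasure_mono:
  assumes "A \<inter> V \<subseteq> B"
  shows "gmeasure V mu A \<le> gmeasure V mu B"
proof -
  have "gmeasure V mu A = (\<integral>\<^sup>+ x. ennreal (vweight mu x) * indicator (A \<inter> V) x \<partial>count_space UNIV)"
    unfolding gmeasure_def by (rule nn_integral_count_space_indicator) (simp add: NO_MATCH_def)
  also have "\<dots> \<le> (\<integral>\<^sup>+ x. ennreal (vweight mu x) * indicator (B \<inter> V) x \<partial>count_space UNIV)"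
    by (intro nn_integral_mono mult_left_mono) (use assms in \<open>auto simp: indicator_def\<close>)
  also have "\<dots> = gmeasure V mu B"
    unfolding gmeasure_def by (rule nn_integral_count_space_indicator[symmetric]) (simp add: NO_MATCH_def)
  finally show ?thesis .
qed

lemma rvol_mono: "s \<le> r \<Longrightarrow> rvol V mu \<rho> s \<le> rvol V mu \<rho> r"
  unfolding rvol_def by (rule gmeasure_mono) auto

lemma hinv_bound:
  assumes "0 \<le> m" "0 \<le> s" "0 < q" "ennreal q \<le> rvol V mu \<rho> s" "s \<le> R" "m \<le> R * q"
  shows "hinv V mu \<rho> m \<le> R"
  unfolding hinv_def
proof (rule cSup_least)
  have "hfun V mu \<rho> 0 = 0" unfolding hfun_def by simp
  then show "{r. 0 \<le> r \<and> hfun V mu \<rho> r \<le> ennreal m} \<noteq> {}" by force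
next
  fix r assume "r \<in> {r. 0 \<le> r \<and> hfun V mu \<rho> r \<le> ennreal m}"
  hence r: "0 \<le> r" "hfun V mu \<rho> r \<le> ennreal m" by auto
  show "r \<le> R"
  proof (rule ccontr)
    assume "\<not> r \<le> R"
    hence rR: "R < r" by simp
    have "ennreal (r * q) = ennreal r * ennreal q" using r assms by (simp add: ennreal_mult)
    also have "\<dots> \<le> ennreal r * rvol V mu \<rho> s" using assms by (intro mult_left_mono) auto
    also have "\<dots> \<le> ennreal r * rvol V mu \<rho> r" using assms rR by (intro mult_left_mono rvol_mono) auto
    also have "\<dots> \<le> ennreal m" using r(2) by (simp add: hfun_def)
    finally have "r * q \<le> m" using assms by (simp add: ennreal_le_iff)
    moreover have "R * q < r * q" using rR assms by simp
    ultimately show False using assms by linarith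
  qed
qed
theorem lemma4p5:
  fixes F :: "'e::metric_space set" and \<rho> :: 'e and \<nu> :: "'e measure"
    and V :: "nat \<Rightarrow> 'e set" and \<mu> :: "nat \<Rightarrow> 'e \<Rightarrow> 'e \<Rightarrow> real"
    and \<alpha> \<beta> \<gamma> :: "nat \<Rightarrow> real" and \<kappa> a b :: real
  assumes F_proper: "\<forall>x r. 0 < r \<longrightarrow> compact (F \<inter> cball x r)"
    and rho_F: "\<rho> \<in> F"
    and nu_sets: "sets \<nu> = sets borel"
    and nu_on_F: "\<forall>A\<in>sets borel. emeasure \<nu> A = emeasure \<nu> (A \<inter> F)"
    and nu_locally_finite: "\<forall>x\<in>F. \<exists>r>0. emeasure \<nu> (ball x r) < top"
    and nu_inner_regular:
      "\<forall>A\<in>sets borel. emeasure \<nu> A = (SUP K\<in>{K. K \<subseteq> A \<and> compact K}. emeasure \<nu> K)"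
    and nu_full_support: "\<forall>x\<in>F. \<forall>r>0. 0 < emeasure \<nu> (ball x r)"
    and graphs: "\<forall>n\<ge>1. weighted_graph (V n) (\<mu> n)"
    and root: "\<forall>n\<ge>1. \<rho> \<in> V n"
    and seq_nonneg: "\<forall>n\<ge>1. 0 \<le> \<alpha> n \<and> 0 \<le> \<beta> n \<and> 0 \<le> \<gamma> n"
    and alpha_div: "filterlim \<alpha> at_top sequentially"
    and beta_div: "filterlim \<beta> at_top sequentially"
    and gamma_div: "filterlim \<gamma> at_top sequentially"
    and A5_i_lower: "\<exists>c>0. \<forall>n\<ge>1. \<forall>x\<in>V n. \<forall>y\<in>V n.
                        gdist (\<mu> n) x y \<ge> c * \<alpha> n * dist x y"
    and A5_i_upper: "\<exists>\<alpha>'::nat \<Rightarrow> real. (\<forall>n. 0 \<le> \<alpha>' n) \<and> \<alpha>' \<in> o(\<alpha>) \<and>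
                        (\<forall>r>0. \<exists>c' n0. \<forall>n\<ge>n0. \<forall>x\<in>V n \<inter> ball \<rho> r. \<forall>y\<in>V n \<inter> ball \<rho> r.
                           gdist (\<mu> n) x y \<le> c' * \<alpha> n * dist x y + \<alpha>' n)"
    and A5_ii: "\<forall>x\<in>F. \<forall>r>0.
                  (\<lambda>n. ennreal (inverse (\<beta> n)) * gmeasure (V n) (\<mu> n) (ball x r))
                    \<longlonglongrightarrow> emeasure \<nu> (ball x r)"
    and kappa_pos: "0 < \<kappa>"
    and A5_iii: "\<exists>c1>0. \<exists>c2>0. \<exists>c3>0. \<exists>n0. \<forall>n\<ge>n0.
                   (\<forall>x\<in>V n. \<forall>y\<in>V n. resist (V n) (\<mu> n) x y \<le> c1 * gdist (\<mu> n) x y powr \<kappa>) \<and>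
                   c2 * \<gamma> n \<le> \<alpha> n powr \<kappa> * \<beta> n \<and> \<alpha> n powr \<kappa> * \<beta> n \<le> c3 * \<gamma> n"
    and I_pos: "0 < a" and I_le: "a \<le> b"
  shows "limsup (\<lambda>n. SUP t\<in>{a..b}. ereal (\<alpha> n powr (-\<kappa>) * hinv (V n) (\<mu> n) \<rho> (\<gamma> n * t)))
           < \<infinity>"
  proof -
  obtain r0 where r0: "r0 > 0" "emeasure \<nu> (ball \<rho> r0) < top"
    using nu_locally_finite rho_F by blast
  have Lpos: "0 < emeasure \<nu> (ball \<rho> r0)" using nu_full_support rho_F r0 by blast
  define L where "L = enn2real (emeasure \<nu> (ball \<rho> r0))"
  have L: "0 < L" "ennreal L = emeasure \<nu> (ball \<rho> r0)"
    using r0 Lpos by (auto simp: L_def enn2real_positive_iff ennreal_enn2real_if)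
  obtain \<alpha>' c' n1 where a': "\<forall>n. 0 \<le> \<alpha>' n" "\<alpha>' \<in> o(\<alpha>)"
    and up: "\<forall>n\<ge>n1. \<forall>x\<in>V n \<inter> ball \<rho> r0. \<forall>y\<in>V n \<inter> ball \<rho> r0.
                           gdist (\<mu> n) x y \<le> c' * \<alpha> n * dist x y + \<alpha>' n"
    using A5_i_upper r0(1) by meson
  obtain c1 c2 c3 n0 where c: "c1>0" "c2>0" "c3>0" and iii: "\<forall>n\<ge>n0.
                   (\<forall>x\<in>V n. \<forall>y\<in>V n. resist (V n) (\<mu> n) x y \<le> c1 * gdist (\<mu> n) x y powr \<kappa>) \<and>
                   c2 * \<gamma> n \<le> \<alpha> n powr \<kappa> * \<beta> n \<and> \<alpha> n powr \<kappa> * \<beta> n \<le> c3 * \<gamma> n"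
    using A5_iii by blast
  define K where "K = \<bar>c'\<bar> * r0 + 1"
  define C where "C = c1 * K powr \<kappa>"
  define lam where "lam = max 1 (2*b/(C*c2*L))"
  define M where "M = lam * C"
  have Kpos: "K > 0" unfolding K_def using r0 by (simp add: add_nonneg_pos)
  have Cpos: "C > 0" unfolding C_def using Kpos c by simp
  have lam1: "lam \<ge> 1" unfolding lam_def by simp
  have "lam * (C*c2*L) \<ge> 2*b/(C*c2*L) * (C*c2*L)"
    using Cpos c L by (intro mult_right_mono) (auto simp: lam_def)
  hence lamb: "lam * C * c2 * L / 2 \<ge> b" using Cpos c L by (simp add: field_simps)
  have "\<forall>Z. \<forall>\<^sub>F n in sequentially. Z < \<alpha> n" using alpha_div filterlim_at_top_dense by blast
  hence ev1: "\<forall>\<^sub>F n in sequentially. 0 < \<alpha> n" by blast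
  have "\<forall>Z. \<forall>\<^sub>F n in sequentially. Z < \<beta> n" using beta_div filterlim_at_top_dense by blast
  hence ev2: "\<forall>\<^sub>F n in sequentially. 0 < \<beta> n" by blast
  have "\<forall>\<^sub>F n in sequentially. norm (\<alpha>' n) \<le> 1 * norm (\<alpha> n)"
    using landau_o.smallD[OF a'(2), of 1] by simp
  hence ev3: "\<forall>\<^sub>F n in sequentially. \<alpha>' n \<le> \<alpha> n"
    using ev1 by eventually_elim auto
  have "ennreal (L/2) < emeasure \<nu> (ball \<rho> r0)"
    using L by (metis ennreal_lessI half_gt_zero less_add_same_cancel1 field_sum_of_halves)
  hence ev4: "\<forall>\<^sub>F n in sequentially. ennreal (L/2) < ennreal (inverse (\<beta> n)) * gmeasure (V n) (\<mu> n) (ball \<rho> r0)"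
    using order_tendstoD(1)[OF A5_ii[rule_format, OF rho_F r0(1)]] by blast
  have ev5: "\<forall>\<^sub>F n in sequentially. max 1 (max n0 n1) \<le> n" by (rule eventually_ge_at_top)
  have "\<forall>\<^sub>F n in sequentially. (SUP t\<in>{a..b}. ereal (\<alpha> n powr (-\<kappa>) * hinv (V n) (\<mu> n) \<rho> (\<gamma> n * t))) \<le> ereal M"
    using ev1 ev2 ev3 ev4 ev5
  proof eventually_elim
    case (elim n)
    have n1: "n \<ge> 1" "n \<ge> n0" "n \<ge> n1" using elim(5) by auto
    have rhoV: "\<rho> \<in> V n" using root n1 by blast
    have iiin: "\<forall>x\<in>V n. \<forall>y\<in>V n. resist (V n) (\<mu> n) x y \<le> c1 * gdist (\<mu> n) x y powr \<kappa>"
       "c2 * \<gamma> n \<le> \<alpha> n powr \<kappa> * \<beta> n" using iii n1 by auto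
    have gd: "resist (V n) (\<mu> n) \<rho> x \<le> C * \<alpha> n powr \<kappa>" if x: "x \<in> V n" "x \<in> ball \<rho> r0" for x
    proof -
      have "gdist (\<mu> n) \<rho> x \<le> c' * \<alpha> n * dist \<rho> x + \<alpha>' n"
        using up n1 rhoV x r0 by auto
      also have "c' * \<alpha> n * dist \<rho> x \<le> \<bar>c'\<bar> * \<alpha> n * r0"
      proof -
        have "c' * \<alpha> n * dist \<rho> x \<le> \<bar>c'\<bar> * \<alpha> n * dist \<rho> x"
          using elim(1) by (intro mult_right_mono) auto
        also have "\<dots> \<le> \<bar>c'\<bar> * \<alpha> n * r0"
          using elim(1) x by (intro mult_left_mono) auto
        finally show ?thesis .
      qed
      hence "c' * \<alpha> n * dist \<rho> x + \<alpha>' n \<le> K * \<alpha> n"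
        using elim(3) unfolding K_def by (simp add: algebra_simps)
      finally have g: "gdist (\<mu> n) \<rho> x \<le> K * \<alpha> n" .
      have g0: "0 \<le> gdist (\<mu> n) \<rho> x" by (simp add: gdist_def)
      have "resist (V n) (\<mu> n) \<rho> x \<le> c1 * gdist (\<mu> n) \<rho> x powr \<kappa>" using iiin rhoV x by blast
      also have "\<dots> \<le> c1 * (K * \<alpha> n) powr \<kappa>"
        using c g g0 kappa_pos by (intro mult_left_mono powr_mono2) auto
      also have "\<dots> = C * \<alpha> n powr \<kappa>"
        using Kpos elim(1) by (simp add: C_def powr_mult)
      finally show ?thesis .
    qed
    have gm_le: "gmeasure (V n) (\<mu> n) (ball \<rho> r0) \<le> rvol (V n) (\<mu> n) \<rho> (C * \<alpha> n powr \<kappa>)"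
      unfolding rvol_def by (rule gmeasure_mono) (use gd in auto)
    have "ennreal (\<beta> n * (L/2)) = ennreal (\<beta> n) * ennreal (L/2)"
      using elim(2) L ennreal_mult[of "\<beta> n" "L/2"] by simp
    also have "\<dots> \<le> ennreal (\<beta> n) * (ennreal (inverse (\<beta> n)) * gmeasure (V n) (\<mu> n) (ball \<rho> r0))"
      using elim(4) by (intro mult_left_mono) auto
    also have "\<dots> = gmeasure (V n) (\<mu> n) (ball \<rho> r0)"
    proof -
      have "ennreal (\<beta> n) * ennreal (inverse (\<beta> n)) = 1"
        using elim(2) ennreal_mult[of "\<beta> n" "inverse (\<beta> n)"] by simp
      thus ?thesis by (metis mult.assoc mult_1)
    qed
    finally have q: "ennreal (\<beta> n * (L/2)) \<le> rvol (V n) (\<mu> n) \<rho> (C * \<alpha> n powr \<kappa>)"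
      using gm_le by simp
    show ?case
    proof (rule SUP_least)
      fix t assume t: "t \<in> {a..b}"
      have g0: "0 \<le> \<gamma> n" using seq_nonneg n1 by auto
      have apos: "0 < \<alpha> n powr \<kappa>" using elim(1) by simp
      have "\<gamma> n * t \<le> \<gamma> n * b" using t g0 by (intro mult_left_mono) auto
      also have "\<dots> \<le> \<gamma> n * (lam * C * c2 * L / 2)" using lamb g0 by (intro mult_left_mono) auto
      also have "\<dots> = (lam * C * L / 2) * (c2 * \<gamma> n)" by (simp add: algebra_simps)
      also have "\<dots> \<le> (lam * C * L / 2) * (\<alpha> n powr \<kappa> * \<beta> n)"
        using iiin(2) lam1 Cpos L by (intro mult_left_mono) auto
      also have "\<dots> = (M * \<alpha> n powr \<kappa>) * (\<beta> n * (L/2))" by (simp add: M_def algebra_simps)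
      finally have m: "\<gamma> n * t \<le> (M * \<alpha> n powr \<kappa>) * (\<beta> n * (L/2))" .
      have sR: "C * \<alpha> n powr \<kappa> \<le> M * \<alpha> n powr \<kappa>"
        using lam1 Cpos apos unfolding M_def by (intro mult_right_mono) auto
      have h: "hinv (V n) (\<mu> n) \<rho> (\<gamma> n * t) \<le> M * \<alpha> n powr \<kappa>"
        by (rule hinv_bound[OF _ _ _ q sR m]) (use g0 t I_pos Cpos apos elim(2) L in auto)
      have "\<alpha> n powr (-\<kappa>) * hinv (V n) (\<mu> n) \<rho> (\<gamma> n * t) \<le> \<alpha> n powr (-\<kappa>) * (M * \<alpha> n powr \<kappa>)"
        using h by (intro mult_left_mono) auto
      also have "\<dots> = M * (\<alpha> n powr (-\<kappa>) * \<alpha> n powr \<kappa>)" by (simp add: algebra_simps)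
      also have "\<alpha> n powr (-\<kappa>) * \<alpha> n powr \<kappa> = 1"
        using elim(1) by (simp add: powr_add[symmetric])
      finally show "ereal (\<alpha> n powr (-\<kappa>) * hinv (V n) (\<mu> n) \<rho> (\<gamma> n * t)) \<le> ereal M" by simp
    qed
  qed
  hence "limsup (\<lambda>n. SUP t\<in>{a..b}. ereal (\<alpha> n powr (-\<kappa>) * hinv (V n) (\<mu> n) \<rho> (\<gamma> n * t))) \<le> ereal M"
    by (rule Limsup_bounded)
  thus ?thesis using le_less_trans by fastforce
qed

end
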